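(* Let $\alpha\in\mathbb{R}$, $\beta\ge 0$, and let $M_n=\sum_{i=1}^n\sigma(i)$ be the magnetization under the one-dimensional Ising measure $\mathbb{I}_{\alpha,\beta}$ on $\{\pm1\}^{\{1,\dots,n\}}$. Set $$\overline{m}=\frac{e^{\beta}\sinh\alpha}{\sqrt{e^{2\beta}\sinh^2\alpha+e^{-2\beta}}},\qquad t_n=n^{1/3}\,\frac{e^{-\beta}\cosh\alpha}{(e^{2\beta}\sinh^2\alpha+e^{-2\beta})^{3/2}},$$ $$\psi(z)=\exp\!\left(-\frac{2e^{\beta}\sinh^3\alpha+(3e^{\beta}-e^{-3\beta})\sinh\alpha}{6\,(e^{2\beta}\sinh^2\alpha+e^{-2\beta})^{5/2}}\,z^3\right).$$ Then $X_n=\frac{M_n-n\overline{m}}{n^{1/3}}$ converges in the complex mod-Gaussian sense with parameters $t_n$ and limiting function $\psi$, i.e. $$\mathbb{E}_{\alpha,\beta}\!\left[e^{zX_n}\right]e^{-t_n z^2/2}\longrightarrow \psi(z)$$ locally uniformly for $z$ in compact subsets of $\mathbb{C}$.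
   Context: The Ising measure $\mathbb{I}_{\alpha,\beta}$ on spin configurations $\sigma:\{1,\dots,n\}\to\{\pm1\}$ gives to $\sigma$ probability proportional to $\exp\big(\alpha\sum_{i=1}^n\sigma(i)+\beta\sum_{i=1}^{n-1}\sigma(i)\sigma(i+1)\big)$. $\mathbb{E}_{\alpha,\beta}$ denotes expectation under this measure. *)

theory Defs
  imports "HOL-Analysis.Analysis"
begin

definition spin_configs :: "nat \<Rightarrow> (nat \<Rightarrow> real) set" where
  "spin_configs n = PiE {1..n} (\<lambda>_. {-1, 1})"

definition ising_weight :: "real \<Rightarrow> real \<Rightarrow> nat \<Rightarrow> (nat \<Rightarrow> real) \<Rightarrow> real" where
  "ising_weight \<alpha> \<beta> n \<sigma> =
     exp (\<alpha> * (\<Sum>i=1..n. \<sigma> i) + \<beta> * (\<Sum>i=1..n-1. \<sigma> i * \<sigma> (i+1)))"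

definition ising_Z :: "real \<Rightarrow> real \<Rightarrow> nat \<Rightarrow> real" where
  "ising_Z \<alpha> \<beta> n = (\<Sum>\<sigma>\<in>spin_configs n. ising_weight \<alpha> \<beta> n \<sigma>)"

definition ising_expect :: "real \<Rightarrow> real \<Rightarrow> nat \<Rightarrow> ((nat \<Rightarrow> real) \<Rightarrow> complex) \<Rightarrow> complex" where
  "ising_expect \<alpha> \<beta> n f =
     (\<Sum>\<sigma>\<in>spin_configs n. complex_of_real (ising_weight \<alpha> \<beta> n \<sigma>) * f \<sigma>)
       / complex_of_real (ising_Z \<alpha> \<beta> n)"

definition magnetization :: "nat \<Rightarrow> (nat \<Rightarrow> real) \<Rightarrow> real" where
  "magnetization n \<sigma> = (\<Sum>i=1..n. \<sigma> i)"

end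

theory Submission
  imports Defs "HOL-Complex_Analysis.Complex_Analysis" "HOL-Real_Asymp.Real_Asymp"
begin


definition zw :: "real \<Rightarrow> nat \<Rightarrow> complex \<Rightarrow> (nat \<Rightarrow> real) \<Rightarrow> complex" where
 "zw \<beta> n a \<sigma> = exp (a * of_real (magnetization n \<sigma>) + of_real (\<beta> * (\<Sum>i=1..n-1. \<sigma> i * \<sigma> (i+1))))"

definition Zc :: "real \<Rightarrow> nat \<Rightarrow> complex \<Rightarrow> complex" where
 "Zc \<beta> n a = (\<Sum>\<sigma>\<in>spin_configs n. zw \<beta> n a \<sigma>)"

definition Pc :: "real \<Rightarrow> nat \<Rightarrow> complex \<Rightarrow> complex" where
 "Pc \<beta> n a = (\<Sum>\<sigma>\<in>spin_configs n. zw \<beta> n a \<sigma> * of_real (\<sigma> n))"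

lemma sum_spin_Suc:
  fixes g :: "(nat \<Rightarrow> real) \<Rightarrow> 'b::comm_monoid_add"
  shows "(\<Sum>\<sigma>\<in>spin_configs (Suc n). g \<sigma>) =
    (\<Sum>\<sigma>\<in>spin_configs n. g (\<sigma>(Suc n := 1)) + g (\<sigma>(Suc n := -1)))"
proof -
  have e: "{1..Suc n} = insert (Suc n) {1..n}" by auto
  have nin: "Suc n \<notin> {1..n}" by simp
  have "(\<Sum>\<sigma>\<in>spin_configs (Suc n). g \<sigma>) =
     (\<Sum>(y,h)\<in>{-1,1::real} \<times> PiE {1..n} (\<lambda>_. {-1,1}). g (h(Suc n := y)))"
    unfolding spin_configs_def e PiE_insert_eq
    by (subst sum.reindex) (use inj_combinator[OF nin] in \<open>auto simp: case_prod_unfold\<close>)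
  also have "\<dots> = (\<Sum>y\<in>{-1,1::real}. \<Sum>h\<in>spin_configs n. g (h(Suc n := y)))"
    unfolding spin_configs_def by (subst sum.cartesian_product) auto
  also have "\<dots> = (\<Sum>h\<in>spin_configs n. \<Sum>y\<in>{-1,1::real}. g (h(Suc n := y)))"
    by (rule sum.swap)
  also have "\<dots> = (\<Sum>\<sigma>\<in>spin_configs n. g (\<sigma>(Suc n := 1)) + g (\<sigma>(Suc n := -1)))"
    by (intro sum.cong) (auto simp: add.commute)
  finally show ?thesis .
qed

lemma spin_val: "\<sigma> \<in> spin_configs n \<Longrightarrow> i \<in> {1..n} \<Longrightarrow> \<sigma> i = 1 \<or> \<sigma> i = -1"
  unfolding spin_configs_def by (auto simp: PiE_def Pi_def)

lemma finite_spin: "finite (spin_configs n)"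
  unfolding spin_configs_def by (auto intro!: finite_PiE)

lemma zw_step:
  assumes "\<sigma> \<in> spin_configs (Suc k)"
  shows "zw \<beta> (Suc (Suc k)) a (\<sigma>(Suc (Suc k) := t)) =
         zw \<beta> (Suc k) a \<sigma> * exp (a * of_real t + of_real (\<beta> * \<sigma> (Suc k) * t))"
proof -
  have m: "magnetization (Suc (Suc k)) (\<sigma>(Suc (Suc k) := t)) = magnetization (Suc k) \<sigma> + t"
  proof -
    have "(\<Sum>i=1..Suc k. (\<sigma>(Suc (Suc k) := t)) i) = (\<Sum>i=1..Suc k. \<sigma> i)"
      by (intro sum.cong) auto
    then show ?thesis unfolding magnetization_def by simp
  qed
  have c: "(\<Sum>i=1..Suc (Suc k) - 1. (\<sigma>(Suc (Suc k) := t)) i * (\<sigma>(Suc (Suc k) := t)) (i+1))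
        = (\<Sum>i=1..Suc k - 1. \<sigma> i * \<sigma> (i+1)) + \<sigma> (Suc k) * t"
  proof -
    have "(\<Sum>i=1..Suc k. (\<sigma>(Suc (Suc k) := t)) i * (\<sigma>(Suc (Suc k) := t)) (i+1))
        = (\<Sum>i=1..k. (\<sigma>(Suc (Suc k) := t)) i * (\<sigma>(Suc (Suc k) := t)) (i+1)) + \<sigma> (Suc k) * t"
      by simp
    also have "(\<Sum>i=1..k. (\<sigma>(Suc (Suc k) := t)) i * (\<sigma>(Suc (Suc k) := t)) (i+1))
       = (\<Sum>i=1..k. \<sigma> i * \<sigma> (i+1))"
      by (intro sum.cong) auto
    finally show ?thesis by simp
  qed
  show ?thesis unfolding zw_def m c
    by (simp add: exp_add[symmetric] algebra_simps)
qed

lemma exp_real_c: "exp (of_real x :: complex) = of_real (exp x)"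
  by (simp add: of_real_exp)

lemma step_pair:
  fixes a :: complex
  assumes "s = 1 \<or> s = -1"
  shows "exp (a * of_real 1 + of_real (\<beta> * s * 1)) + exp (a * of_real (-1) + of_real (\<beta> * s * (-1)))
     = (exp a + exp (-a)) * (of_real (exp \<beta>) + of_real (exp (-\<beta>))) / 2
       + of_real s * ((exp a - exp (-a)) * (of_real (exp \<beta>) - of_real (exp (-\<beta>))) / 2)"
    and "exp (a * of_real 1 + of_real (\<beta> * s * 1)) - exp (a * of_real (-1) + of_real (\<beta> * s * (-1)))
     = (exp a - exp (-a)) * (of_real (exp \<beta>) + of_real (exp (-\<beta>))) / 2
       + of_real s * ((exp a + exp (-a)) * (of_real (exp \<beta>) - of_real (exp (-\<beta>))) / 2)"
proof -
  have e1: "exp (a * of_real 1 + of_real (\<beta> * s * 1)) = exp a * of_real (exp (\<beta> * s))"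
    by (simp add: exp_add of_real_exp)
  have e2: "exp (a * of_real (-1) + of_real (\<beta> * s * (-1))) = exp (-a) * of_real (exp (-(\<beta> * s)))"
    by (simp add: of_real_exp mult_exp_exp)
  show "exp (a * of_real 1 + of_real (\<beta> * s * 1)) + exp (a * of_real (-1) + of_real (\<beta> * s * (-1)))
     = (exp a + exp (-a)) * (of_real (exp \<beta>) + of_real (exp (-\<beta>))) / 2
       + of_real s * ((exp a - exp (-a)) * (of_real (exp \<beta>) - of_real (exp (-\<beta>))) / 2)"
    unfolding e1 e2 using assms by (auto simp: field_simps)
  show "exp (a * of_real 1 + of_real (\<beta> * s * 1)) - exp (a * of_real (-1) + of_real (\<beta> * s * (-1)))
     = (exp a - exp (-a)) * (of_real (exp \<beta>) + of_real (exp (-\<beta>))) / 2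
       + of_real s * ((exp a + exp (-a)) * (of_real (exp \<beta>) - of_real (exp (-\<beta>))) / 2)"
    unfolding e1 e2 using assms by (auto simp: field_simps)
qed

lemma pairZ:
  assumes s: "\<sigma> \<in> spin_configs (Suc k)"
  shows "zw \<beta> (Suc (Suc k)) a (\<sigma>(Suc (Suc k) := 1)) + zw \<beta> (Suc (Suc k)) a (\<sigma>(Suc (Suc k) := - 1))
    = zw \<beta> (Suc k) a \<sigma> *
     ((exp a + exp (-a)) * (of_real (exp \<beta>) + of_real (exp (-\<beta>))) / 2
       + of_real (\<sigma> (Suc k)) * ((exp a - exp (-a)) * (of_real (exp \<beta>) - of_real (exp (-\<beta>))) / 2))"
proof -
  have v: "\<sigma> (Suc k) = 1 \<or> \<sigma> (Suc k) = -1" using spin_val[of \<sigma> "Suc k" "Suc k"] s by auto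
  show ?thesis
    unfolding zw_step[OF s] distrib_left[symmetric] step_pair(1)[OF v] ..
qed

lemma pairP:
  assumes s: "\<sigma> \<in> spin_configs (Suc k)"
  shows "zw \<beta> (Suc (Suc k)) a (\<sigma>(Suc (Suc k) := 1)) * of_real ((\<sigma>(Suc (Suc k) := 1)) (Suc (Suc k)))
        + zw \<beta> (Suc (Suc k)) a (\<sigma>(Suc (Suc k) := - 1)) * of_real ((\<sigma>(Suc (Suc k) := - 1)) (Suc (Suc k)))
    = zw \<beta> (Suc k) a \<sigma> *
     ((exp a - exp (-a)) * (of_real (exp \<beta>) + of_real (exp (-\<beta>))) / 2
       + of_real (\<sigma> (Suc k)) * ((exp a + exp (-a)) * (of_real (exp \<beta>) - of_real (exp (-\<beta>))) / 2))"
proof -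
  have v: "\<sigma> (Suc k) = 1 \<or> \<sigma> (Suc k) = -1" using spin_val[of \<sigma> "Suc k" "Suc k"] s by auto
  have "zw \<beta> (Suc (Suc k)) a (\<sigma>(Suc (Suc k) := 1)) * of_real ((\<sigma>(Suc (Suc k) := 1)) (Suc (Suc k)))
        + zw \<beta> (Suc (Suc k)) a (\<sigma>(Suc (Suc k) := - 1)) * of_real ((\<sigma>(Suc (Suc k) := - 1)) (Suc (Suc k)))
     = zw \<beta> (Suc k) a \<sigma> * (exp (a * of_real 1 + of_real (\<beta> * \<sigma> (Suc k) * 1)) - exp (a * of_real (-1) + of_real (\<beta> * \<sigma> (Suc k) * (-1))))"
    unfolding zw_step[OF s] by (simp add: algebra_simps)
  then show ?thesis unfolding step_pair(2)[OF v] .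
qed

lemma sum_lin:
  fixes f g :: "'a \<Rightarrow> complex"
  shows "(\<Sum>x\<in>A. f x * (c0 + g x * c1)) = c0 * (\<Sum>x\<in>A. f x) + c1 * (\<Sum>x\<in>A. f x * g x)"
  by (simp add: sum.distrib sum_distrib_left distrib_left mult_ac)

lemma Zc_rec:
  "Zc \<beta> (Suc (Suc k)) a = (exp a + exp (-a)) * (of_real (exp \<beta>) + of_real (exp (-\<beta>))) / 2 * Zc \<beta> (Suc k) a
     + (exp a - exp (-a)) * (of_real (exp \<beta>) - of_real (exp (-\<beta>))) / 2 * Pc \<beta> (Suc k) a"
proof -
  have "Zc \<beta> (Suc (Suc k)) a = (\<Sum>\<sigma>\<in>spin_configs (Suc k). zw \<beta> (Suc k) a \<sigma> *
     ((exp a + exp (-a)) * (of_real (exp \<beta>) + of_real (exp (-\<beta>))) / 2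
       + of_real (\<sigma> (Suc k)) * ((exp a - exp (-a)) * (of_real (exp \<beta>) - of_real (exp (-\<beta>))) / 2)))"
    unfolding Zc_def by (subst sum_spin_Suc) (rule sum.cong[OF refl], rule pairZ)
  then show ?thesis unfolding Pc_def Zc_def sum_lin by (simp add: mult_ac)
qed

lemma Pc_rec:
  "Pc \<beta> (Suc (Suc k)) a = (exp a - exp (-a)) * (of_real (exp \<beta>) + of_real (exp (-\<beta>))) / 2 * Zc \<beta> (Suc k) a
     + (exp a + exp (-a)) * (of_real (exp \<beta>) - of_real (exp (-\<beta>))) / 2 * Pc \<beta> (Suc k) a"
proof -
  have "Pc \<beta> (Suc (Suc k)) a = (\<Sum>\<sigma>\<in>spin_configs (Suc k). zw \<beta> (Suc k) a \<sigma> *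
     ((exp a - exp (-a)) * (of_real (exp \<beta>) + of_real (exp (-\<beta>))) / 2
       + of_real (\<sigma> (Suc k)) * ((exp a + exp (-a)) * (of_real (exp \<beta>) - of_real (exp (-\<beta>))) / 2)))"
    unfolding Pc_def by (subst sum_spin_Suc) (rule sum.cong[OF refl], rule pairP)
  then show ?thesis unfolding Pc_def Zc_def sum_lin by (simp add: mult_ac)
qed

lemma spin0: "spin_configs 0 = {\<lambda>_. undefined}"
  unfolding spin_configs_def by simp

lemma Zc1: "Zc \<beta> 1 a = exp a + exp (-a)"
  unfolding Zc_def One_nat_def sum_spin_Suc spin0 by (simp add: zw_def magnetization_def)

lemma Pc1: "Pc \<beta> 1 a = exp a - exp (-a)"
  unfolding Pc_def One_nat_def sum_spin_Suc spin0 by (simp add: zw_def magnetization_def)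

lemma rec_alg:
  fixes z3 :: "'a::comm_ring"
  shows "z3 = c0*z2 + c1*p2 \<Longrightarrow> p2 = d0*z1 + d1*p1 \<Longrightarrow> z2 = c0*z1 + c1*p1 \<Longrightarrow>
    z3 = (c0+d1)*z2 + (c1*d0 - c0*d1)*z1"
  by (simp add: algebra_simps)

lemma Zc_rec3:
  "Zc \<beta> (Suc (Suc (Suc k))) a = (2 * of_real (exp \<beta>) * cosh a) * Zc \<beta> (Suc (Suc k)) a
     - of_real (exp (2*\<beta>) - exp (-2*\<beta>)) * Zc \<beta> (Suc k) a"
proof -
  define E where "E = exp a"
  define e where "e = exp (-a)"
  define y where "y = (of_real (exp \<beta>) :: complex)"
  define yi where "yi = (of_real (exp (-\<beta>)) :: complex)"
  have Ee: "E * e = 1" unfolding E_def e_def by (simp add: mult_exp_exp)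
  have yy: "y * yi = 1" unfolding y_def yi_def by (simp add: of_real_mult[symmetric] mult_exp_exp del: of_real_mult)
  have q: "of_real (exp (2*\<beta>) - exp (-2*\<beta>)) = y*y - yi*yi"
    unfolding y_def yi_def by (simp add: exp_double[symmetric] of_real_mult[symmetric] mult_exp_exp del: of_real_mult)
  have ch: "cosh a = (E + e)/2" unfolding E_def e_def cosh_field_def by simp
  have r: "Zc \<beta> (Suc (Suc (Suc k))) a = ((E+e)*(y+yi)/2 + (E+e)*(y-yi)/2) * Zc \<beta> (Suc (Suc k)) a
     + ((E-e)*(y-yi)/2 * ((E-e)*(y+yi)/2) - (E+e)*(y+yi)/2 * ((E+e)*(y-yi)/2)) * Zc \<beta> (Suc k) a"
    by (rule rec_alg[OF Zc_rec[of \<beta> "Suc k" a] Pc_rec[of \<beta> k a] Zc_rec[of \<beta> k a], folded E_def e_def y_def yi_def])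
  have c1: "(E+e)*(y+yi)/2 + (E+e)*(y-yi)/2 = 2 * y * cosh a" unfolding ch by (simp add: field_simps)
  have c2: "(E-e)*(y-yi)/2 * ((E-e)*(y+yi)/2) - (E+e)*(y+yi)/2 * ((E+e)*(y-yi)/2) = - (E*e) * (y*y - yi*yi)"
    by (simp add: field_simps)
  show ?thesis unfolding r c1 c2 Ee q by (simp add: y_def algebra_simps)
qed

lemma lin_rec:
  fixes u :: "nat \<Rightarrow> 'a::field"
  assumes rec: "\<And>k. u (Suc (Suc k)) = (l1 + l2) * u (Suc k) - l1 * l2 * u k"
    and ne: "l1 \<noteq> l2"
  shows "u k = (u 1 - l2 * u 0) / (l1 - l2) * l1 ^ k + (l1 * u 0 - u 1) / (l1 - l2) * l2 ^ k"
proof -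
  have ne': "l1 - l2 \<noteq> 0" using ne by simp
  define cA where "cA = (u 1 - l2 * u 0) / (l1 - l2)"
  define cB where "cB = (l1 * u 0 - u 1) / (l1 - l2)"
  have b0: "cA + cB = u 0"
  proof -
    have "cA + cB = ((l1 - l2) * u 0) / (l1 - l2)" unfolding cA_def cB_def
      by (simp add: add_divide_distrib[symmetric] algebra_simps)
    then show ?thesis using ne' by simp
  qed
  have b1: "cA * l1 + cB * l2 = u 1"
  proof -
    have "cA * l1 + cB * l2 = ((l1 - l2) * u 1) / (l1 - l2)" unfolding cA_def cB_def
      by (simp add: add_divide_distrib[symmetric] times_divide_eq_left[symmetric] algebra_simps del: times_divide_eq_left)
    then show ?thesis using ne' by simp
  qed
  define F where "F k = cA * l1 ^ k + cB * l2 ^ k" for k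
  have "u k = F k \<and> u (Suc k) = F (Suc k)"
  proof (induction k)
    case 0
    show ?case using b0 b1 unfolding F_def by (simp add: mult.commute)
  next
    case (Suc k)
    then show ?case
      unfolding rec F_def by (simp add: algebra_simps)
  qed
  then show ?thesis unfolding F_def cA_def cB_def by simp
qed

definition Dc :: "real \<Rightarrow> complex \<Rightarrow> complex" where
  "Dc \<beta> a = of_real (exp (2*\<beta>)) * sinh a ^ 2 + of_real (exp (-2*\<beta>))"
definition Sc :: "real \<Rightarrow> complex \<Rightarrow> complex" where
  "Sc \<beta> a = csqrt (Dc \<beta> a)"
definition lp :: "real \<Rightarrow> complex \<Rightarrow> complex" where
  "lp \<beta> a = of_real (exp \<beta>) * cosh a + Sc \<beta> a"
definition lm :: "real \<Rightarrow> complex \<Rightarrow> complex" where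
  "lm \<beta> a = of_real (exp \<beta>) * cosh a - Sc \<beta> a"
definition Ac :: "real \<Rightarrow> complex \<Rightarrow> complex" where
  "Ac \<beta> a = (Zc \<beta> 2 a - lm \<beta> a * Zc \<beta> 1 a) / (lp \<beta> a - lm \<beta> a)"
definition Bc :: "real \<Rightarrow> complex \<Rightarrow> complex" where
  "Bc \<beta> a = (lp \<beta> a * Zc \<beta> 1 a - Zc \<beta> 2 a) / (lp \<beta> a - lm \<beta> a)"

lemma Zc_closed:
  assumes "Sc \<beta> a \<noteq> 0"
  shows "Zc \<beta> (Suc k) a = Ac \<beta> a * lp \<beta> a ^ k + Bc \<beta> a * lm \<beta> a ^ k"
proof -
  have sum: "lp \<beta> a + lm \<beta> a = 2 * of_real (exp \<beta>) * cosh a" unfolding lp_def lm_def by simp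
  have y2: "(of_real (exp (2*\<beta>)) :: complex) = of_real (exp \<beta>) * of_real (exp \<beta>)"
    by (simp add: exp_double[symmetric] of_real_mult[symmetric] mult_exp_exp del: of_real_mult)
  have S2: "Sc \<beta> a * Sc \<beta> a = Dc \<beta> a" unfolding Sc_def using power2_csqrt[of "Dc \<beta> a"]
    by (simp add: power2_eq_square)
  have prod: "lp \<beta> a * lm \<beta> a = of_real (exp (2*\<beta>) - exp (-2*\<beta>))"
  proof -
    have "lp \<beta> a * lm \<beta> a = of_real (exp \<beta>) * of_real (exp \<beta>) * cosh a ^ 2 - Sc \<beta> a * Sc \<beta> a"
      unfolding lp_def lm_def by (simp add: algebra_simps power2_eq_square)
    also have "\<dots> = of_real (exp (2*\<beta>)) * (cosh a ^ 2 - sinh a ^2) - of_real (exp (-2*\<beta>))"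
      unfolding S2 Dc_def y2 by (simp add: algebra_simps)
    also have "cosh a ^ 2 - sinh a ^2 = 1" using cosh_square_eq[of a] by simp
    finally show ?thesis by simp
  qed
  have ne: "lp \<beta> a \<noteq> lm \<beta> a" using assms unfolding lp_def lm_def by simp
  have "Zc \<beta> (Suc k) a = (Zc \<beta> (Suc 1) a - lm \<beta> a * Zc \<beta> (Suc 0) a) / (lp \<beta> a - lm \<beta> a) * lp \<beta> a ^ k
       + (lp \<beta> a * Zc \<beta> (Suc 0) a - Zc \<beta> (Suc 1) a) / (lp \<beta> a - lm \<beta> a) * lm \<beta> a ^ k"
    by (rule lin_rec[where u = "\<lambda>k. Zc \<beta> (Suc k) a", OF _ ne]) (simp add: Zc_rec3 sum prod)
  then show ?thesis unfolding Ac_def Bc_def by (simp add: numeral_2_eq_2)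
qed

lemma Z_real: "complex_of_real (ising_Z \<alpha> \<beta> n) = Zc \<beta> n (of_real \<alpha>)"
  unfolding ising_Z_def Zc_def of_real_sum
  by (intro sum.cong refl) (simp add: ising_weight_def zw_def of_real_exp magnetization_def)

lemma expect_formula:
  fixes z :: complex and c mb :: real
  assumes "c \<noteq> 0"
  shows "ising_expect \<alpha> \<beta> n (\<lambda>\<sigma>. exp (z * complex_of_real ((magnetization n \<sigma> - real n * mb) / c)))
     = exp (- (z / of_real c) * of_real (real n * mb)) * Zc \<beta> n (of_real \<alpha> + z / of_real c) / Zc \<beta> n (of_real \<alpha>)"
proof -
  have "(\<Sum>\<sigma>\<in>spin_configs n. complex_of_real (ising_weight \<alpha> \<beta> n \<sigma>) *
          exp (z * complex_of_real ((magnetization n \<sigma> - real n * mb) / c)))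
      = (\<Sum>\<sigma>\<in>spin_configs n. exp (- (z / of_real c) * of_real (real n * mb)) * zw \<beta> n (of_real \<alpha> + z / of_real c) \<sigma>)"
  proof (intro sum.cong refl)
    fix \<sigma>
    have "complex_of_real (ising_weight \<alpha> \<beta> n \<sigma>) * exp (z * complex_of_real ((magnetization n \<sigma> - real n * mb) / c))
       = exp (of_real (\<alpha> * magnetization n \<sigma> + \<beta> * (\<Sum>i=1..n-1. \<sigma> i * \<sigma> (i+1))) + z * complex_of_real ((magnetization n \<sigma> - real n * mb) / c))"
      by (simp add: ising_weight_def of_real_exp exp_add magnetization_def)
    also have "\<dots> = exp (- (z / of_real c) * of_real (real n * mb) + ((of_real \<alpha> + z / of_real c) * of_real (magnetization n \<sigma>) + of_real (\<beta> * (\<Sum>i=1..n-1. \<sigma> i * \<sigma> (i+1)))))"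
      using assms by (intro arg_cong[where f=exp]) (simp add: field_simps)
    also have "\<dots> = exp (- (z / of_real c) * of_real (real n * mb)) * zw \<beta> n (of_real \<alpha> + z / of_real c) \<sigma>"
      unfolding zw_def mult_exp_exp ..
    finally show "complex_of_real (ising_weight \<alpha> \<beta> n \<sigma>) * exp (z * complex_of_real ((magnetization n \<sigma> - real n * mb) / c))
       = exp (- (z / of_real c) * of_real (real n * mb)) * zw \<beta> n (of_real \<alpha> + z / of_real c) \<sigma>" .
  qed
  then show ?thesis unfolding ising_expect_def Z_real Zc_def by (simp add: sum_distrib_left)
qed



lemma uniform_limit_seq:
  fixes F :: "nat \<Rightarrow> 'a \<Rightarrow> 'b::real_normed_vector"
  assumes H: "\<And>zs. (\<forall>n. zs n \<in> K) \<Longrightarrow> ((\<lambda>n. F n (zs n) - G (zs n)) \<longlonglongrightarrow> 0)"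
  shows "uniform_limit K F G sequentially"
  unfolding uniform_limit_iff
proof (intro allI impI, rule ccontr)
  fix e :: real assume e: "e > 0" and ne: "\<not> (\<forall>\<^sub>F n in sequentially. \<forall>x\<in>K. dist (F n x) (G x) < e)"
  then have fr: "\<forall>N. \<exists>n\<ge>N. \<exists>x\<in>K. dist (F n x) (G x) \<ge> e"
    unfolding eventually_sequentially by (auto simp: not_less)
  then obtain x0 where x0: "x0 \<in> K" by blast
  define zs where "zs n = (if \<exists>x\<in>K. dist (F n x) (G x) \<ge> e then SOME x. x \<in> K \<and> dist (F n x) (G x) \<ge> e else x0)" for n
  have zsK: "zs n \<in> K" for n
  proof (cases "\<exists>x\<in>K. dist (F n x) (G x) \<ge> e")
    case True
    then have "\<exists>x. x \<in> K \<and> dist (F n x) (G x) \<ge> e" by blast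
    from someI_ex[OF this] True show ?thesis unfolding zs_def by simp
  qed (simp add: zs_def x0)
  have "(\<lambda>n. F n (zs n) - G (zs n)) \<longlonglongrightarrow> 0" using H zsK by blast
  then have "\<forall>\<^sub>F n in sequentially. norm (F n (zs n) - G (zs n)) < e"
    using e by (simp add: tendsto_iff dist_norm)
  then obtain N where N: "\<And>n. n \<ge> N \<Longrightarrow> norm (F n (zs n) - G (zs n)) < e"
    unfolding eventually_sequentially by blast
  obtain n where n: "n \<ge> N" and ex: "\<exists>x\<in>K. dist (F n x) (G x) \<ge> e" using fr by blast
  then have "\<exists>x. x \<in> K \<and> dist (F n x) (G x) \<ge> e" by blast
  from someI_ex[OF this] ex have "dist (F n (zs n)) (G (zs n)) \<ge> e" unfolding zs_def by simp
  with N[OF n] show False by (simp add: dist_norm)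
qed



lemma dDc: "(Dc \<beta> has_field_derivative 2 * of_real (exp (2*\<beta>)) * sinh a * cosh a) (at a within T)"
  unfolding Dc_def[abs_def] by (auto intro!: derivative_eq_intros simp: power2_eq_square)

lemma Re_pos_nonpos: "Re z > 0 \<Longrightarrow> z \<notin> \<real>\<^sub>\<le>\<^sub>0"
  by (auto simp: complex_nonpos_Reals_iff)

lemma Sc_sq: "Sc \<beta> a * Sc \<beta> a = Dc \<beta> a"
  unfolding Sc_def using power2_csqrt[of "Dc \<beta> a"] by (simp add: power2_eq_square)

lemma Sc_nz: "Re (Dc \<beta> a) > 0 \<Longrightarrow> Sc \<beta> a \<noteq> 0"
  using Sc_sq[of \<beta> a] by auto

lemma dSc: assumes "Re (Dc \<beta> a) > 0"
  shows "(Sc \<beta> has_field_derivative of_real (exp (2*\<beta>)) * sinh a * cosh a / Sc \<beta> a) (at a within T)"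
proof -
  have "((\<lambda>a. csqrt (Dc \<beta> a)) has_field_derivative (2 * of_real (exp (2*\<beta>)) * sinh a * cosh a) / (2 * csqrt (Dc \<beta> a))) (at a within T)"
    by (rule has_field_derivative_csqrt'[OF dDc Re_pos_nonpos[OF assms]])
  then show ?thesis unfolding Sc_def[abs_def] by (simp add: mult.assoc)
qed

lemma dlp: assumes "Re (Dc \<beta> a) > 0"
  shows "(lp \<beta> has_field_derivative of_real (exp \<beta>) * sinh a + of_real (exp (2*\<beta>)) * sinh a * cosh a / Sc \<beta> a) (at a within T)"
  unfolding lp_def[abs_def] by (auto intro!: derivative_eq_intros dSc[OF assms])

lemma y2: "(of_real (exp (2*\<beta>)) :: complex) = of_real (exp \<beta>) * of_real (exp \<beta>)"
    by (simp add: exp_double[symmetric] of_real_mult[symmetric] mult_exp_exp del: of_real_mult)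

definition L0 where "L0 \<beta> a = Ln (lp \<beta> a)"
definition L1 where "L1 \<beta> a = of_real (exp \<beta>) * sinh a / Sc \<beta> a"
definition L2 where "L2 \<beta> a = of_real (exp (-\<beta>)) * cosh a / Sc \<beta> a ^ 3"
definition L3 where "L3 \<beta> a = - of_real (exp (-\<beta>)) * sinh a *
   (2 * of_real (exp (2*\<beta>)) * sinh a ^ 2 + 3 * of_real (exp (2*\<beta>)) - of_real (exp (-2*\<beta>))) / Sc \<beta> a ^ 5"

lemma dL0: assumes "Re (Dc \<beta> a) > 0" "Re (lp \<beta> a) > 0"
  shows "(L0 \<beta> has_field_derivative L1 \<beta> a) (at a within T)"
proof -
  have "((\<lambda>a. Ln (lp \<beta> a)) has_field_derivative inverse (lp \<beta> a) * (of_real (exp \<beta>) * sinh a + of_real (exp (2*\<beta>)) * sinh a * cosh a / Sc \<beta> a)) (at a within T)"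
    by (rule DERIV_chain2[OF has_field_derivative_Ln[OF Re_pos_nonpos[OF assms(2)]] dlp[OF assms(1)]])
  moreover have "inverse (lp \<beta> a) * (of_real (exp \<beta>) * sinh a + of_real (exp (2*\<beta>)) * sinh a * cosh a / Sc \<beta> a) = L1 \<beta> a"
  proof -
    have S: "Sc \<beta> a \<noteq> 0" using Sc_nz[OF assms(1)] .
    have l: "lp \<beta> a \<noteq> 0" using assms(2) by auto
    have "of_real (exp \<beta>) * sinh a + of_real (exp (2*\<beta>)) * sinh a * cosh a / Sc \<beta> a = L1 \<beta> a * lp \<beta> a"
      using S unfolding L1_def y2 lp_def by (simp add: field_simps)
    then show ?thesis using l by simp
  qed
  ultimately show ?thesis unfolding L0_def[abs_def] by simp
qed

lemma dL1: assumes "Re (Dc \<beta> a) > 0"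
  shows "(L1 \<beta> has_field_derivative L2 \<beta> a) (at a within T)"
proof -
  note S = Sc_nz[OF assms]
  have e1: "(of_real (exp \<beta>) :: complex) * of_real (exp (-2*\<beta>)) = of_real (exp (-\<beta>))"
    by (simp add: of_real_mult[symmetric] mult_exp_exp del: of_real_mult)
  have eq: "(cosh a * of_real (exp \<beta>) * Sc \<beta> a - of_real (exp \<beta>) * sinh a * (of_real (exp (2 * \<beta>)) * sinh a * cosh a) / Sc \<beta> a) /
     (Sc \<beta> a * Sc \<beta> a) = L2 \<beta> a"
  proof -
    have "(cosh a * of_real (exp \<beta>) * Sc \<beta> a - of_real (exp \<beta>) * sinh a * (of_real (exp (2 * \<beta>)) * sinh a * cosh a) / Sc \<beta> a) /
     (Sc \<beta> a * Sc \<beta> a) = of_real (exp \<beta>) * cosh a * (Sc \<beta> a * Sc \<beta> a - of_real (exp (2 * \<beta>)) * sinh a ^ 2) / Sc \<beta> a ^ 3"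
      using S by (simp add: field_simps power2_eq_square power3_eq_cube)
    also have "\<dots> = L2 \<beta> a" unfolding Sc_sq L2_def Dc_def using e1 by (simp add: mult_ac)
    finally show ?thesis .
  qed
  show ?thesis unfolding L1_def[abs_def]
    by (auto intro!: derivative_eq_intros dSc[OF assms] simp: S eq[symmetric])
qed

lemma dL2: assumes "Re (Dc \<beta> a) > 0"
  shows "(L2 \<beta> has_field_derivative L3 \<beta> a) (at a within T)"
proof -
  note S = Sc_nz[OF assms]
  have eq: "(sinh a * of_real (exp (- \<beta>)) * Sc \<beta> a ^ 3 -
      of_real (exp (- \<beta>)) * cosh a * (3 * (of_real (exp (2 * \<beta>)) * sinh a * cosh a * (Sc \<beta> a)\<^sup>2)) / Sc \<beta> a) /
     Sc \<beta> a ^ 6 = L3 \<beta> a"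
  proof -
    have "(sinh a * of_real (exp (- \<beta>)) * Sc \<beta> a ^ 3 -
      of_real (exp (- \<beta>)) * cosh a * (3 * (of_real (exp (2 * \<beta>)) * sinh a * cosh a * (Sc \<beta> a)\<^sup>2)) / Sc \<beta> a) /
     Sc \<beta> a ^ 6 = of_real (exp (- \<beta>)) * sinh a * (Sc \<beta> a * Sc \<beta> a - 3 * of_real (exp (2 * \<beta>)) * cosh a ^ 2) / Sc \<beta> a ^ 5"
      using S by (simp add: field_simps power2_eq_square power3_eq_cube) (simp add: eval_nat_numeral mult_ac)
    also have "\<dots> = L3 \<beta> a" unfolding Sc_sq L3_def Dc_def cosh_square_eq by (simp add: algebra_simps)
    finally show ?thesis .
  qed
  show ?thesis unfolding L2_def[abs_def]
    by (auto intro!: derivative_eq_intros dSc[OF assms] simp: S eq[symmetric])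
qed



lemma dL3_ex: assumes "Re (Dc \<beta> a) > 0"
  shows "\<exists>d. (L3 \<beta> has_field_derivative d) (at a)"
  unfolding L3_def[abs_def]
  by (rule exI) (auto intro!: derivative_eq_intros dSc[OF assms] simp: Sc_nz[OF assms])

lemma taylor_L0:
  fixes a0 :: complex
  assumes good: "\<And>a. a \<in> ball a0 r0 \<Longrightarrow> Re (Dc \<beta> a) > 0 \<and> Re (lp \<beta> a) > 0" and r0: "r0 > 0"
  shows "\<exists>C. \<forall>h. norm h \<le> r0/2 \<longrightarrow>
     norm (L0 \<beta> (a0+h) - (L0 \<beta> a0 + L1 \<beta> a0 * h + L2 \<beta> a0 * h^2/2 + L3 \<beta> a0 * h^3/6)) \<le> C * norm h ^ 4"
proof -
  define U where "U = ball a0 r0"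
  define S where "S = cball a0 (r0/2)"
  have SU: "S \<subseteq> U" unfolding S_def U_def using r0 by (auto simp: subset_eq)
  have hol3: "L3 \<beta> holomorphic_on U"
    unfolding U_def by (subst holomorphic_on_open) (auto dest!: good intro: dL3_ex)
  have hol4: "deriv (L3 \<beta>) holomorphic_on U"
    by (rule holomorphic_deriv[OF hol3]) (simp add: U_def)
  have "continuous_on S (deriv (L3 \<beta>))"
    using holomorphic_on_imp_continuous_on[OF hol4] SU continuous_on_subset by blast
  then have "compact (deriv (L3 \<beta>) ` S)" unfolding S_def by (intro compact_continuous_image) auto
  then obtain B where B: "\<And>x. x \<in> S \<Longrightarrow> norm (deriv (L3 \<beta>) x) \<le> B"
    using compact_imp_bounded bounded_iff by (metis image_eqI)
  define f where "f = (\<lambda>i::nat. if i = 0 then L0 \<beta> else if i = 1 then L1 \<beta> else if i = 2 then L2 \<beta>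
      else if i = 3 then L3 \<beta> else deriv (L3 \<beta>))"
  have der: "(f i has_field_derivative f (Suc i) x) (at x within S)" if x: "x \<in> S" and i: "i \<le> 3" for i x
  proof -
    have gx: "Re (Dc \<beta> x) > 0" "Re (lp \<beta> x) > 0" using good x SU unfolding U_def by auto
    have "i = 0 \<or> i = 1 \<or> i = 2 \<or> i = 3" using i by auto
    then show ?thesis
    proof (elim disjE)
      assume "i = 3"
      have "L3 \<beta> field_differentiable at x" using hol3 x SU
        unfolding U_def by (metis holomorphic_on_open open_ball subsetD field_differentiable_def)
      then have "(L3 \<beta> has_field_derivative deriv (L3 \<beta>) x) (at x)"
        using DERIV_deriv_iff_field_differentiable by blast
      then show ?thesis using \<open>i = 3\<close> unfolding f_def by (simp add: has_field_derivative_at_within)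
    qed (auto simp: f_def intro: dL0 dL1 dL2 gx)
  qed
  have B': "\<And>x. x \<in> S \<Longrightarrow> cmod (f (Suc 3) x) \<le> B" using B unfolding f_def by simp
  show ?thesis
  proof (intro exI allI impI)
    fix h :: complex assume h: "norm h \<le> r0/2"
    have "cmod (f 0 (a0+h) - (\<Sum>i\<le>3. f i a0 * (a0+h-a0) ^ i / fact i)) \<le> B * cmod (a0+h - a0) ^ Suc 3 / fact 3"
      by (rule complex_Taylor[OF convex_cball[of a0 "r0/2", folded S_def] der B'])
         (use h r0 in \<open>auto simp: S_def dist_norm\<close>)
    then show "norm (L0 \<beta> (a0+h) - (L0 \<beta> a0 + L1 \<beta> a0 * h + L2 \<beta> a0 * h^2/2 + L3 \<beta> a0 * h^3/6)) \<le> B/6 * norm h ^ 4"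
      by (simp add: f_def eval_nat_numeral fact_numeral add_ac)
  qed
qed

lemma sinh_of_real_c: "sinh (complex_of_real x) = of_real (sinh x)"
  by (simp add: sinh_field_def[of "complex_of_real x"] sinh_field_def[of x] of_real_exp[symmetric] of_real_minus[symmetric] del: of_real_minus)
lemma cosh_of_real_c: "cosh (complex_of_real x) = of_real (cosh x)"
  by (simp add: cosh_field_def[of "complex_of_real x"] cosh_field_def[of x] of_real_exp[symmetric] of_real_minus[symmetric] del: of_real_minus)

lemma vals:
  fixes \<alpha> \<beta> :: real
  defines "DD \<equiv> exp (2*\<beta>) * (sinh \<alpha>)\<^sup>2 + exp (-2*\<beta>)"
  shows "DD > 0" and "Dc \<beta> (of_real \<alpha>) = of_real DD"
    and "Sc \<beta> (of_real \<alpha>) = of_real (sqrt DD)"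
    and "lp \<beta> (of_real \<alpha>) = of_real (exp \<beta> * cosh \<alpha> + sqrt DD)"
    and "lm \<beta> (of_real \<alpha>) = of_real (exp \<beta> * cosh \<alpha> - sqrt DD)"
    and "L1 \<beta> (of_real \<alpha>) = of_real (exp \<beta> * sinh \<alpha> / sqrt DD)"
    and "L2 \<beta> (of_real \<alpha>) = of_real (exp (-\<beta>) * cosh \<alpha> / DD powr (3/2))"
    and "L3 \<beta> (of_real \<alpha>) = of_real (- (2 * exp \<beta> * (sinh \<alpha>)^3 + (3 * exp \<beta> - exp (-3*\<beta>)) * sinh \<alpha>) / DD powr (5/2))"
proof -
  show pos: "DD > 0" unfolding DD_def by (intro add_nonneg_pos) auto
  show Dv: "Dc \<beta> (of_real \<alpha>) = of_real DD" unfolding Dc_def DD_def sinh_of_real_c by simp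
  show Sv: "Sc \<beta> (of_real \<alpha>) = of_real (sqrt DD)" unfolding Sc_def Dv using pos by simp
  show "lp \<beta> (of_real \<alpha>) = of_real (exp \<beta> * cosh \<alpha> + sqrt DD)" unfolding lp_def Sv cosh_of_real_c by simp
  show "lm \<beta> (of_real \<alpha>) = of_real (exp \<beta> * cosh \<alpha> - sqrt DD)" unfolding lm_def Sv cosh_of_real_c by simp
  show "L1 \<beta> (of_real \<alpha>) = of_real (exp \<beta> * sinh \<alpha> / sqrt DD)" unfolding L1_def Sv sinh_of_real_c by simp
  have p3: "DD powr (3/2) = sqrt DD ^ 3"
    using pos by (simp add: powr_half_sqrt[symmetric] powr_realpow[symmetric] powr_powr)
  have p5: "DD powr (5/2) = sqrt DD ^ 5"
    using pos by (simp add: powr_half_sqrt[symmetric] powr_realpow[symmetric] powr_powr)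
  show "L2 \<beta> (of_real \<alpha>) = of_real (exp (-\<beta>) * cosh \<alpha> / DD powr (3/2))"
    unfolding L2_def Sv cosh_of_real_c p3 by simp
  have e1: "exp (-\<beta>) * exp (2*\<beta>) = exp \<beta>" by (simp add: mult_exp_exp)
  have e2: "exp (-\<beta>) * exp (-2*\<beta>) = exp (-3*\<beta>)" by (simp add: mult_exp_exp)
  have "- exp (-\<beta>) * sinh \<alpha> * (2 * exp (2*\<beta>) * sinh \<alpha> ^ 2 + 3 * exp (2*\<beta>) - exp (-2*\<beta>))
     = - (2 * (exp (-\<beta>) * exp (2*\<beta>)) * (sinh \<alpha>)^3 + (3 * (exp (-\<beta>) * exp (2*\<beta>)) - exp (-\<beta>) * exp (-2*\<beta>)) * sinh \<alpha>)"
    by (simp add: algebra_simps power2_eq_square power3_eq_cube)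
  then have e3: "- exp (-\<beta>) * sinh \<alpha> * (2 * exp (2*\<beta>) * sinh \<alpha> ^ 2 + 3 * exp (2*\<beta>) - exp (-2*\<beta>))
     = - (2 * exp \<beta> * (sinh \<alpha>)^3 + (3 * exp \<beta> - exp (-3*\<beta>)) * sinh \<alpha>)"
    unfolding e1 e2 .
  show "L3 \<beta> (of_real \<alpha>) = of_real (- (2 * exp \<beta> * (sinh \<alpha>)^3 + (3 * exp \<beta> - exp (-3*\<beta>)) * sinh \<alpha>) / DD powr (5/2))"
    unfolding L3_def Sv sinh_of_real_c p5 e3[symmetric] by simp
qed

lemma Ac_nz:
  fixes \<alpha> \<beta> :: real
  assumes b: "\<beta> \<ge> 0"
  shows "Ac \<beta> (of_real \<alpha>) \<noteq> 0"
proof -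
  define DD where "DD = exp (2*\<beta>) * (sinh \<alpha>)\<^sup>2 + exp (-2*\<beta>)"
  note V = vals[of \<beta> \<alpha>, folded DD_def]
  define E where "E = exp \<alpha>"
  define e where "e = exp (-\<alpha>)"
  define y where "y = exp \<beta>"
  define yi where "yi = exp (-\<beta>)"
  define s where "s = sqrt DD"
  have s: "s > 0" unfolding s_def using V(1) by simp
  have Ep: "E + e > 0" unfolding E_def e_def by (simp add: add_pos_pos)
  have Epos: "E > 0" "e > 0" unfolding E_def e_def by simp_all
  have yyi: "y - yi \<ge> 0" unfolding y_def yi_def using b by simp
  have yi: "yi > 0" unfolding yi_def by simp
  have ea: "exp (complex_of_real \<alpha>) = of_real E" "exp (- complex_of_real \<alpha>) = of_real e"
    unfolding E_def e_def by (simp_all add: of_real_exp)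
  have Z1: "Zc \<beta> 1 (of_real \<alpha>) = of_real (E + e)" unfolding Zc1 ea by simp
  have Z2: "Zc \<beta> 2 (of_real \<alpha>) = of_real ((E+e)*(y+yi)/2*(E+e) + (E-e)*(y-yi)/2*(E-e))"
    using Zc_rec[of \<beta> 0 "of_real \<alpha>"] Zc1[of \<beta> "of_real \<alpha>", unfolded One_nat_def]
      Pc1[of \<beta> "of_real \<alpha>", unfolded One_nat_def] ea by (simp add: numeral_2_eq_2 y_def yi_def)
  have ch: "cosh \<alpha> = (E+e)/2" unfolding E_def e_def cosh_field_def by simp
  have num: "Zc \<beta> 2 (of_real \<alpha>) - lm \<beta> (of_real \<alpha>) * Zc \<beta> 1 (of_real \<alpha>)
     = of_real ((E+e)^2*yi/2 + (E-e)^2*(y-yi)/2 + s*(E+e))"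
  proof -
    have "(E+e)*(y+yi)/2*(E+e) + (E-e)*(y-yi)/2*(E-e) - (y * cosh \<alpha> - s) * (E+e)
       = (E+e)^2*yi/2 + (E-e)^2*(y-yi)/2 + s*(E+e)"
      unfolding ch by (simp add: field_simps power2_eq_square)
    then have "complex_of_real ((E+e)*(y+yi)/2*(E+e) + (E-e)*(y-yi)/2*(E-e) - (y * cosh \<alpha> - s) * (E+e))
       = complex_of_real ((E+e)^2*yi/2 + (E-e)^2*(y-yi)/2 + s*(E+e))" by (rule arg_cong)
    then show ?thesis unfolding Z2 Z1 V(5) y_def[symmetric] s_def[symmetric] by simp
  qed
  have pos: "(E+e)^2*yi/2 + (E-e)^2*(y-yi)/2 + s*(E+e) > 0"
    using s Ep yyi yi Epos by (intro add_nonneg_pos add_nonneg_nonneg divide_nonneg_pos mult_nonneg_nonneg mult_pos_pos) auto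
  have dn: "lp \<beta> (complex_of_real \<alpha>) - lm \<beta> (complex_of_real \<alpha>) = complex_of_real (2 * s)"
    unfolding V(4) V(5) s_def by simp
  show ?thesis unfolding Ac_def num dn of_real_divide[symmetric] of_real_eq_0_iff using pos s by simp
qed

lemma ratio_lt1:
  fixes \<alpha> \<beta> :: real
  shows "norm (lm \<beta> (of_real \<alpha>) / lp \<beta> (of_real \<alpha>)) < 1" and "lp \<beta> (of_real \<alpha>) \<noteq> 0"
    and "Re (lp \<beta> (of_real \<alpha>)) > 0" and "Re (Dc \<beta> (of_real \<alpha>)) > 0"
proof -
  define DD where "DD = exp (2*\<beta>) * (sinh \<alpha>)\<^sup>2 + exp (-2*\<beta>)"
  note V = vals[of \<beta> \<alpha>, folded DD_def]
  have s: "sqrt DD > 0" using V(1) by simp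
  have c: "exp \<beta> * cosh \<alpha> > 0" by simp
  have "\<bar>exp \<beta> * cosh \<alpha> - sqrt DD\<bar> < exp \<beta> * cosh \<alpha> + sqrt DD" using s c by linarith
  then show "norm (lm \<beta> (of_real \<alpha>) / lp \<beta> (of_real \<alpha>)) < 1"
    unfolding V(4) V(5) norm_divide norm_of_real using s c by (simp add: divide_less_eq)
  have p: "exp \<beta> * cosh \<alpha> + sqrt DD > 0" using s c by linarith
  show "Re (lp \<beta> (of_real \<alpha>)) > 0" unfolding V(4) Re_complex_of_real using p .
  then show "lp \<beta> (of_real \<alpha>) \<noteq> 0" by auto
  show "Re (Dc \<beta> (of_real \<alpha>)) > 0" unfolding V(2) using V(1) by simp
qed



lemma cont_Sc: "Re (Dc \<beta> a) > 0 \<Longrightarrow> isCont (Sc \<beta>) a"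
  using DERIV_isCont[OF dSc[of \<beta> a UNIV]] by simp
lemma cont_lp: "Re (Dc \<beta> a) > 0 \<Longrightarrow> isCont (lp \<beta>) a"
  using DERIV_isCont[OF dlp[of \<beta> a UNIV]] by simp
lemma cont_Dc: "isCont (Dc \<beta>) a"
  using DERIV_isCont[OF dDc[of \<beta> a UNIV]] by simp
lemma cont_cosh: "isCont (cosh :: complex \<Rightarrow> complex) a"
  using DERIV_isCont[OF has_field_derivative_cosh[of "\<lambda>x. x" 1 a UNIV, OF DERIV_ident]] by simp
lemma cont_lm: "Re (Dc \<beta> a) > 0 \<Longrightarrow> isCont (lm \<beta>) a"
proof -
  assume "Re (Dc \<beta> a) > 0"
  then have "isCont (\<lambda>a. of_real (exp \<beta>) * cosh a - Sc \<beta> a) a"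
    using cont_Sc cont_cosh by (intro continuous_intros) auto
  then show ?thesis unfolding lm_def[abs_def] .
qed
lemma cont_Zc: "isCont (Zc \<beta> n) a"
  unfolding Zc_def[abs_def] zw_def by (intro continuous_intros)
lemma cont_Ac: "Re (Dc \<beta> a) > 0 \<Longrightarrow> isCont (Ac \<beta>) a"
proof -
  assume d: "Re (Dc \<beta> a) > 0"
  have "lp \<beta> a - lm \<beta> a \<noteq> 0" using Sc_nz[OF d] unfolding lp_def lm_def by simp
  then have "isCont (\<lambda>a. (Zc \<beta> 2 a - lm \<beta> a * Zc \<beta> 1 a) / (lp \<beta> a - lm \<beta> a)) a"
    using cont_lm[OF d] cont_lp[OF d] cont_Zc by (intro continuous_intros) auto
  then show ?thesis unfolding Ac_def[abs_def] .
qed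
lemma cont_Bc: "Re (Dc \<beta> a) > 0 \<Longrightarrow> isCont (Bc \<beta>) a"
proof -
  assume d: "Re (Dc \<beta> a) > 0"
  have "lp \<beta> a - lm \<beta> a \<noteq> 0" using Sc_nz[OF d] unfolding lp_def lm_def by simp
  then have "isCont (\<lambda>a. (lp \<beta> a * Zc \<beta> 1 a - Zc \<beta> 2 a) / (lp \<beta> a - lm \<beta> a)) a"
    using cont_lm[OF d] cont_lp[OF d] cont_Zc by (intro continuous_intros) auto
  then show ?thesis unfolding Bc_def[abs_def] .
qed

definition Gc where "Gc \<beta> k a = Ac \<beta> a + Bc \<beta> a * (lm \<beta> a / lp \<beta> a) ^ k"

lemma Zc_G: assumes "Re (Dc \<beta> a) > 0" "lp \<beta> a \<noteq> 0"
  shows "Zc \<beta> (Suc k) a = Gc \<beta> k a * exp (of_nat k * L0 \<beta> a)"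
proof -
  have "exp (of_nat k * L0 \<beta> a) = lp \<beta> a ^ k"
    unfolding exp_of_nat_mult L0_def using assms(2) by simp
  then show ?thesis unfolding Zc_closed[OF Sc_nz[OF assms(1)]] Gc_def using assms(2)
    by (simp add: field_simps power_divide)
qed

lemma Zc_real_nz: "n \<ge> 1 \<Longrightarrow> Zc \<beta> n (of_real \<alpha>) \<noteq> 0"
proof -
  assume n: "n \<ge> 1"
  have ne: "spin_configs n \<noteq> {}" unfolding spin_configs_def by (simp add: PiE_eq_empty_iff)
  have "ising_Z \<alpha> \<beta> n > 0" unfolding ising_Z_def ising_weight_def
    by (intro sum_pos finite_spin ne) auto
  then show ?thesis unfolding Z_real[symmetric] by simp
qed



lemma ident:
  fixes z h w R mb vv kk K3 tt cn Nn Nk :: complex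
  assumes "cn \<noteq> 0" "Nn = cn^3" "h = z/cn" "tt = cn * vv" "kk = -6*K3"
    "w = mb*h + vv*h^2/2 + kk*h^3/6 + R" "Nk = Nn - 1"
  shows "-h*(Nn*mb) + Nk*w - tt*z^2/2 = -K3*z^3 - w + Nn*R"
  using assms(1) unfolding assms(2-7) by (simp add: field_simps power2_eq_square power3_eq_cube)





lemma exp_alg:
  fixes A B B0 T G1 G0 :: complex
  assumes "G0 \<noteq> 0"
  shows "exp A * (G1 * exp B) / (G0 * exp B0) * exp T = G1 / G0 * exp (A + (B - B0) + T)"
  using assms by (simp add: exp_add exp_diff field_simps)

theorem theorem2p1:
  fixes \<alpha> \<beta> :: real
  assumes "\<beta> \<ge> 0"
  defines "D \<equiv> exp (2*\<beta>) * (sinh \<alpha>)\<^sup>2 + exp (-2*\<beta>)"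
  defines "mbar \<equiv> exp \<beta> * sinh \<alpha> / sqrt D"
  defines "t \<equiv> (\<lambda>n::nat. real n powr (1/3) * (exp (-\<beta>) * cosh \<alpha> / D powr (3/2)))"
  defines "\<psi> \<equiv> (\<lambda>z::complex. exp (- complex_of_real
              ((2 * exp \<beta> * (sinh \<alpha>)^3 + (3 * exp \<beta> - exp (-3*\<beta>)) * sinh \<alpha>)
                / (6 * D powr (5/2))) * z^3))"
  defines "X \<equiv> (\<lambda>n::nat. \<lambda>\<sigma>. (magnetization n \<sigma> - real n * mbar) / real n powr (1/3))"
  shows "\<forall>K. compact K \<longrightarrow>
     uniform_limit K
       (\<lambda>n z. ising_expect \<alpha> \<beta> n (\<lambda>\<sigma>. exp (z * complex_of_real (X n \<sigma>)))
               * exp (- complex_of_real (t n) * z^2 / 2))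
       \<psi> sequentially"
proof (intro allI impI)
  fix K :: "complex set" assume cK: "compact K"
  obtain Rk0 where Rk0: "\<forall>z\<in>K. norm z \<le> Rk0" using compact_imp_bounded[OF cK] unfolding bounded_iff by auto
  define Rk where "Rk = max Rk0 0"
  have Rk: "\<And>z. z \<in> K \<Longrightarrow> norm z \<le> Rk" "Rk \<ge> 0" using Rk0 unfolding Rk_def by force+
  define a0 where "a0 = complex_of_real \<alpha>"
  note V = vals[of \<beta> \<alpha>, folded D_def]
  note RL = ratio_lt1[of \<beta> \<alpha>, folded a0_def]
  have ev: "\<forall>\<^sub>F a in at a0. Re (Dc \<beta> a) > 0 \<and> Re (lp \<beta> a) > 0"
  proof -
    have "((\<lambda>a. Re (Dc \<beta> a)) \<longlongrightarrow> Re (Dc \<beta> a0)) (at a0)"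
      using cont_Dc[where \<beta>=\<beta> and a=a0] unfolding isCont_def by (intro tendsto_Re)
    then have 1: "\<forall>\<^sub>F a in at a0. Re (Dc \<beta> a) > 0" using RL(4) by (rule order_tendstoD(1))
    have "((\<lambda>a. Re (lp \<beta> a)) \<longlongrightarrow> Re (lp \<beta> a0)) (at a0)"
      using cont_lp[OF RL(4)] unfolding isCont_def by (intro tendsto_Re)
    then have 2: "\<forall>\<^sub>F a in at a0. Re (lp \<beta> a) > 0" using RL(3) by (rule order_tendstoD(1))
    show ?thesis using 1 2 by eventually_elim auto
  qed
  then obtain r0 where r0: "r0 > 0" "\<And>a. a \<in> ball a0 r0 \<Longrightarrow> Re (Dc \<beta> a) > 0 \<and> Re (lp \<beta> a) > 0"
  proof -
    obtain d where d: "d > 0" "\<And>x. x \<noteq> a0 \<and> dist x a0 < d \<Longrightarrow> Re (Dc \<beta> x) > 0 \<and> Re (lp \<beta> x) > 0"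
      using ev unfolding eventually_at by blast
    have "\<And>a. a \<in> ball a0 d \<Longrightarrow> Re (Dc \<beta> a) > 0 \<and> Re (lp \<beta> a) > 0"
      using d(2) RL(3,4) by (metis dist_commute mem_ball)
    then show ?thesis using d(1) that by blast
  qed
  obtain C where TC: "\<And>h. norm h \<le> r0/2 \<Longrightarrow>
     norm (L0 \<beta> (a0+h) - (L0 \<beta> a0 + L1 \<beta> a0 * h + L2 \<beta> a0 * h^2/2 + L3 \<beta> a0 * h^3/6)) \<le> C * norm h ^ 4"
    using taylor_L0[OF r0(2) r0(1)] by blast
  define v where "v = exp (-\<beta>) * cosh \<alpha> / D powr (3/2)"
  define K3 where "K3 = (2 * exp \<beta> * (sinh \<alpha>)^3 + (3 * exp \<beta> - exp (-3*\<beta>)) * sinh \<alpha>) / (6 * D powr (5/2))"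
  have L1v: "L1 \<beta> a0 = of_real mbar" unfolding a0_def V(6) mbar_def ..
  have L2v: "L2 \<beta> a0 = of_real v" unfolding a0_def V(7) v_def ..
  have r3: "- (2 * exp \<beta> * (sinh \<alpha>)^3 + (3 * exp \<beta> - exp (-3*\<beta>)) * sinh \<alpha>) / D powr (5/2) = -6 * K3"
    unfolding K3_def using V(1) by (simp add: field_simps)
  have L3v: "L3 \<beta> a0 = - 6 * of_real K3" unfolding a0_def V(8) r3 by simp
  have psi: "\<And>z. \<psi> z = exp (- of_real K3 * z^3)" unfolding \<psi>_def K3_def ..
  have tv: "\<And>n. t n = real n powr (1/3) * v" unfolding t_def v_def ..
  have Ac0: "Ac \<beta> a0 \<noteq> 0" unfolding a0_def by (rule Ac_nz[OF assms(1)])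
  define \<rho> where "\<rho> a = lm \<beta> a / lp \<beta> a" for a
  have cont\<rho>: "isCont \<rho> a0" unfolding \<rho>_def[abs_def]
    using cont_lm[OF RL(4)] cont_lp[OF RL(4)] RL(2) by (intro continuous_intros) auto
  have \<rho>0: "norm (\<rho> a0) < 1" unfolding \<rho>_def using RL(1) .
  define q where "q = (1 + norm (\<rho> a0))/2"
  have q: "norm (\<rho> a0) < q" "q < 1" "q \<ge> 0" unfolding q_def using \<rho>0 by auto
  show "uniform_limit K (\<lambda>n z. ising_expect \<alpha> \<beta> n (\<lambda>\<sigma>. exp (z * complex_of_real (X n \<sigma>)))
               * exp (- complex_of_real (t n) * z^2 / 2)) \<psi> sequentially"
  proof (rule uniform_limit_seq)
    fix zs :: "nat \<Rightarrow> complex" assume zsK: "\<forall>n. zs n \<in> K"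
    show "(\<lambda>n. ising_expect \<alpha> \<beta> n (\<lambda>\<sigma>. exp (zs n * complex_of_real (X n \<sigma>)))
               * exp (- complex_of_real (t n) * (zs n)^2 / 2) - \<psi> (zs n)) \<longlonglongrightarrow> 0"
    proof -
    define c where "c n = real n powr (1/3)" for n
    define hh where "hh n = zs n / of_real (c n)" for n
    define an where "an n = a0 + hh n" for n
    have cpos: "\<And>n. n \<ge> 1 \<Longrightarrow> c n > 0" unfolding c_def by simp
    have c3: "\<And>n. n \<ge> 1 \<Longrightarrow> c n ^ 3 = real n"
    proof -
      fix n :: nat assume n: "n \<ge> 1"
      have "c n ^ 3 = (real n powr (1/3)) powr (real 3)" unfolding c_def
        using n by (subst powr_realpow) auto
      also have "\<dots> = real n" by (simp add: powr_powr)
      finally show "c n ^ 3 = real n" .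
    qed
    have clim: "filterlim c at_top sequentially" unfolding c_def by real_asymp
    have c0lim: "(\<lambda>n. B / c n) \<longlonglongrightarrow> 0" for B
      by (rule tendsto_divide_0[OF tendsto_const filterlim_at_top_imp_at_infinity[OF clim]])
    have hb: "\<forall>\<^sub>F n in sequentially. norm (hh n) \<le> Rk / c n"
      using eventually_ge_at_top[of "1::nat"]
    proof eventually_elim
      case (elim n)
      then show ?case unfolding hh_def norm_divide using cpos[OF elim] Rk(1)[OF zsK[rule_format]]
        by (simp add: divide_right_mono)
    qed
    have hlim: "hh \<longlonglongrightarrow> 0" by (rule Lim_null_comparison[OF hb c0lim])
    have alim: "an \<longlonglongrightarrow> a0" unfolding an_def using tendsto_add[OF tendsto_const hlim] by simp
    have evh: "\<forall>\<^sub>F n in sequentially. norm (hh n) < r0/2"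
    proof -
      have "r0/2 > 0" using r0(1) by simp
      then show ?thesis using hlim unfolding tendsto_iff dist_norm diff_zero by blast
    qed
    have dom: "\<And>n. norm (hh n) < r0/2 \<Longrightarrow> Re (Dc \<beta> (an n)) > 0 \<and> Re (lp \<beta> (an n)) > 0"
      using r0 unfolding an_def by (intro r0(2)) (auto simp: dist_norm)
    have \<rho>lim: "(\<lambda>n. \<rho> (an n)) \<longlonglongrightarrow> \<rho> a0" by (rule isCont_tendsto_compose[OF cont\<rho> alim])
    have evq: "\<forall>\<^sub>F n in sequentially. norm (\<rho> (an n)) < q"
      using tendsto_norm[OF \<rho>lim] q(1) by (rule order_tendstoD(2))
    have "(\<lambda>n. q ^ n) \<longlonglongrightarrow> 0" using q by (intro LIMSEQ_power_zero) simp
    then have qlim: "(\<lambda>n. q ^ (n - 1)) \<longlonglongrightarrow> 0"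
      by (rule filterlim_compose[OF _ filterlim_minus_const_nat_at_top])
    have pw1: "(\<lambda>n. \<rho> (an n) ^ (n - 1)) \<longlonglongrightarrow> 0"
    proof (rule Lim_null_comparison[OF _ qlim])
      show "\<forall>\<^sub>F n in sequentially. norm (\<rho> (an n) ^ (n - 1)) \<le> q ^ (n - 1)"
        using evq by eventually_elim (simp add: norm_power power_mono)
    qed
    have pw0: "(\<lambda>n. \<rho> a0 ^ (n - 1)) \<longlonglongrightarrow> 0"
    proof (rule Lim_null_comparison[OF _ qlim])
      show "\<forall>\<^sub>F n in sequentially. norm (\<rho> a0 ^ (n - 1)) \<le> q ^ (n - 1)"
        using q by (simp add: norm_power power_mono)
    qed
    have Aclim: "(\<lambda>n. Ac \<beta> (an n)) \<longlonglongrightarrow> Ac \<beta> a0" by (rule isCont_tendsto_compose[OF cont_Ac[OF RL(4)] alim])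
    have Bclim: "(\<lambda>n. Bc \<beta> (an n)) \<longlonglongrightarrow> Bc \<beta> a0" by (rule isCont_tendsto_compose[OF cont_Bc[OF RL(4)] alim])
    have lplim: "(\<lambda>n. lp \<beta> (an n)) \<longlonglongrightarrow> lp \<beta> a0" by (rule isCont_tendsto_compose[OF cont_lp[OF RL(4)] alim])
    have G1: "(\<lambda>n. Gc \<beta> (n-1) (an n)) \<longlonglongrightarrow> Ac \<beta> a0"
      using tendsto_add[OF Aclim tendsto_mult[OF Bclim pw1]] unfolding Gc_def \<rho>_def by simp
    have G0: "(\<lambda>n. Gc \<beta> (n-1) a0) \<longlonglongrightarrow> Ac \<beta> a0"
      using tendsto_add[OF tendsto_const[of "Ac \<beta> a0"] tendsto_mult[OF tendsto_const[of "Bc \<beta> a0"] pw0]]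
      unfolding Gc_def \<rho>_def by simp
    define Q where "Q n = Gc \<beta> (n-1) (an n) / Gc \<beta> (n-1) a0 * (lp \<beta> a0 / lp \<beta> (an n))" for n
    have "Q \<longlonglongrightarrow> Ac \<beta> a0 / Ac \<beta> a0 * (lp \<beta> a0 / lp \<beta> a0)"
      unfolding Q_def by (intro tendsto_mult tendsto_divide G1 G0 Ac0 tendsto_const lplim RL(2))
    then have Qlim: "Q \<longlonglongrightarrow> 1" using Ac0 RL(2) by simp
    define RR where "RR h = L0 \<beta> (a0+h) - (L0 \<beta> a0 + L1 \<beta> a0 * h + L2 \<beta> a0 * h^2/2 + L3 \<beta> a0 * h^3/6)" for h
    define Rn where "Rn n = of_nat n * RR (hh n)" for n
    have Rnb: "\<forall>\<^sub>F n in sequentially. norm (Rn n) \<le> \<bar>C\<bar> * Rk^4 / c n"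
      using eventually_ge_at_top[of "1::nat"] evh hb
    proof eventually_elim
      case (elim n)
      have cn: "c n > 0" using cpos elim(1) by simp
      have "norm (Rn n) = real n * norm (RR (hh n))" unfolding Rn_def by (simp add: norm_mult)
      also have "\<dots> \<le> real n * (\<bar>C\<bar> * norm (hh n) ^ 4)"
        using TC[of "hh n"] elim(2) unfolding RR_def
        by (intro mult_left_mono) (auto intro: order_trans[OF _ mult_right_mono[OF abs_ge_self]])
      also have "\<dots> \<le> real n * (\<bar>C\<bar> * (Rk / c n) ^ 4)"
        using elim(3) by (intro mult_left_mono power_mono) auto
      also have "\<dots> = \<bar>C\<bar> * Rk^4 / c n"
        using c3[OF elim(1)] cn by (simp add: field_simps power_divide) (simp add: eval_nat_numeral)
      finally show ?case .
    qed
    have Rnlim: "Rn \<longlonglongrightarrow> 0" by (rule Lim_null_comparison[OF Rnb c0lim])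
    have Elim: "(\<lambda>n. Q n * exp (Rn n) - 1) \<longlonglongrightarrow> 0"
      using tendsto_diff[OF tendsto_mult[OF Qlim tendsto_exp[OF Rnlim]] tendsto_const[of 1]] by simp
    define M where "M = exp (\<bar>K3\<bar> * Rk^3)"
    have psib: "norm (\<psi> (zs n)) \<le> M" for n
    proof -
      have "norm (\<psi> (zs n)) = exp (Re (- of_real K3 * zs n ^ 3))" unfolding psi by simp
      also have "\<dots> \<le> exp (norm (- of_real K3 * zs n ^ 3))" by (rule exp_mono[OF complex_Re_le_cmod])
      also have "\<dots> \<le> M" unfolding M_def using Rk(1)[OF zsK[rule_format]] Rk(2)
        by (simp add: norm_mult norm_power mult_left_mono power_mono)
      finally show ?thesis .
    qed
    have idn: "\<forall>\<^sub>F n in sequentially.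
       ising_expect \<alpha> \<beta> n (\<lambda>\<sigma>. exp (zs n * complex_of_real (X n \<sigma>))) * exp (- complex_of_real (t n) * (zs n)^2 / 2) - \<psi> (zs n)
       = \<psi> (zs n) * (Q n * exp (Rn n) - 1)"
      using eventually_ge_at_top[of "1::nat"] evh
    proof eventually_elim
      case (elim n)
      obtain k where nk: "n = Suc k" using elim(1) by (cases n) auto
      have cn: "c n > 0" using cpos elim(1) by simp
      have nk1: "n - 1 = k" using nk by simp
      have da: "Re (Dc \<beta> (an n)) > 0" "Re (lp \<beta> (an n)) > 0" using dom[OF elim(2)] by auto
      have lpa: "lp \<beta> (an n) \<noteq> 0" using da(2) by auto
      have E1: "ising_expect \<alpha> \<beta> n (\<lambda>\<sigma>. exp (zs n * complex_of_real (X n \<sigma>)))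
         = exp (- hh n * of_real (real n * mbar)) * Zc \<beta> n (an n) / Zc \<beta> n a0"
        unfolding X_def hh_def an_def a0_def c_def by (rule expect_formula) (use cn in \<open>simp add: c_def\<close>)
      have Za: "Zc \<beta> n (an n) = Gc \<beta> k (an n) * exp (of_nat k * L0 \<beta> (an n))"
        using Zc_G[OF da(1) lpa, of k] by (simp only: nk)
      have Z0: "Zc \<beta> n a0 = Gc \<beta> k a0 * exp (of_nat k * L0 \<beta> a0)"
        using Zc_G[OF RL(4) RL(2), of k] by (simp only: nk)
      have G0nz: "Gc \<beta> k a0 \<noteq> 0" using Zc_real_nz[OF elim(1), of \<beta> \<alpha>] Z0 unfolding a0_def by auto
      define w where "w = L0 \<beta> (an n) - L0 \<beta> a0"
      have expo: "- hh n * (of_nat n * of_real mbar) + of_nat k * w - of_real (t n) * (zs n)^2/2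
          = - of_real K3 * (zs n)^3 - w + of_nat n * RR (hh n)"
      proof (rule ident)
        show "complex_of_real (c n) \<noteq> 0" using cn by simp
        show "of_nat n = complex_of_real (c n) ^ 3" using c3[OF elim(1)]
          by (metis of_real_of_nat_eq of_real_power)
        show "hh n = zs n / complex_of_real (c n)" unfolding hh_def ..
        show "complex_of_real (t n) = complex_of_real (c n) * of_real v" unfolding tv c_def by simp
        show "L3 \<beta> a0 = - 6 * complex_of_real K3" by (rule L3v)
        show "w = of_real mbar * hh n + of_real v * (hh n)^2/2 + L3 \<beta> a0 * (hh n)^3/6 + RR (hh n)"
          unfolding w_def RR_def an_def L1v L2v by simp
        show "(of_nat k :: complex) = of_nat n - 1" unfolding nk by simp
      qed
      have ew: "exp (- w) = lp \<beta> a0 / lp \<beta> (an n)"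
        unfolding w_def L0_def using lpa RL(2) by (simp add: exp_diff exp_minus)
      have "ising_expect \<alpha> \<beta> n (\<lambda>\<sigma>. exp (zs n * complex_of_real (X n \<sigma>))) * exp (- complex_of_real (t n) * (zs n)^2 / 2)
        = exp (- hh n * of_real (real n * mbar)) * (Gc \<beta> k (an n) * exp (of_nat k * L0 \<beta> (an n)))
           / (Gc \<beta> k a0 * exp (of_nat k * L0 \<beta> a0)) * exp (- complex_of_real (t n) * (zs n)^2 / 2)"
        unfolding E1 Za Z0 ..
      also have "\<dots> = Gc \<beta> k (an n) / Gc \<beta> k a0 * exp (- hh n * of_real (real n * mbar)
          + (of_nat k * L0 \<beta> (an n) - of_nat k * L0 \<beta> a0) + - complex_of_real (t n) * (zs n)^2 / 2)"
        by (rule exp_alg[OF G0nz])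
      also have "- hh n * of_real (real n * mbar) + (of_nat k * L0 \<beta> (an n) - of_nat k * L0 \<beta> a0)
           + - complex_of_real (t n) * (zs n)^2 / 2
         = - hh n * (of_nat n * of_real mbar) + of_nat k * w - of_real (t n) * (zs n)^2/2"
        unfolding w_def by (simp add: algebra_simps)
      also note expo
      also have "Gc \<beta> k (an n) / Gc \<beta> k a0 * exp (- of_real K3 * (zs n)^3 - w + of_nat n * RR (hh n))
         = \<psi> (zs n) * (Q n * exp (Rn n))"
        unfolding psi Q_def Rn_def nk1 exp_add diff_conv_add_uminus ew[symmetric] by simp
      finally show ?case by (simp add: algebra_simps)
    qed
    show ?thesis
    proof (rule Lim_null_comparison)
      show "\<forall>\<^sub>F n in sequentially. norm (ising_expect \<alpha> \<beta> n (\<lambda>\<sigma>. exp (zs n * complex_of_real (X n \<sigma>))) * exp (- complex_of_real (t n) * (zs n)^2 / 2) - \<psi> (zs n))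
          \<le> M * norm (Q n * exp (Rn n) - 1)"
        using idn by eventually_elim (simp add: norm_mult mult_right_mono psib)
      show "(\<lambda>n. M * norm (Q n * exp (Rn n) - 1)) \<longlonglongrightarrow> 0"
        using tendsto_mult[OF tendsto_const[of M] tendsto_norm[OF Elim]] by simp
    qed
    qed
  qed
qed


end
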